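(* Let $q$ be a prime power and $m$ a positive integer. For $i\in\{1,2\}$ let $V_i=\mathbb F_{q^m}^{k_i}$ and let $U_i\subseteq V_i$ be a cutting $[n_i,k_i]_{q^m/q}$ system which is $(k_i-1,\,n_i-m-1+t_i)_q$-evasive, where $t_1,t_2\ge 0$ are integers with $t_1+t_2<m+2$. Then $U_1\oplus U_2\subseteq V_1\oplus V_2$ is a cutting $[n_1+n_2,\,k_1+k_2]_{q^m/q}$ system.
   Context: An $[n,k]_{q^m/q}$ system is an $\mathbb F_q$-subspace $U$ of $\mathbb F_{q^m}^k$ with $\dim_{\mathbb F_q}(U)=n$ and $\langle U\rangle_{\mathbb F_{q^m}}=\mathbb F_{q^m}^k$. It is cutting if for every $\mathbb F_{q^m}$-hyperplane $H$ one has $\langle H\cap U\rangle_{\mathbb F_{q^m}}=H$. It is $(h,r)_q$-evasive if $\dim_{\mathbb F_q}(U\cap H)\le r$ for every $h$-dimensional $\mathbb F_{q^m}$-subspace $H$. *)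

theory Defs
  imports "HOL-Computational_Algebra.Primes"
begin

text \<open>Ambient field: a finite field type 'a (playing the role of F_{q^m}).
  Vectors of F^k are modelled as functions nat => 'a vanishing outside {0..<k}.
  Linear-algebra notions are parameterised by a set C of scalars:
  C = UNIV gives F_{q^m}-linear notions, C = K (a subfield) gives F_q-linear ones.\<close>

definition is_subfield :: "'a::field set \<Rightarrow> bool" where
  "is_subfield K \<longleftrightarrow> 0 \<in> K \<and> 1 \<in> K \<and> (\<forall>x\<in>K. \<forall>y\<in>K. x + y \<in> K \<and> x * y \<in> K)
     \<and> (\<forall>x\<in>K. - x \<in> K) \<and> (\<forall>x\<in>K. x \<noteq> 0 \<longrightarrow> inverse x \<in> K)"

definition vecs :: "nat \<Rightarrow> (nat \<Rightarrow> 'a::field) set" where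
  "vecs k = {v. \<forall>i\<ge>k. v i = 0}"

definition span_over :: "'a::field set \<Rightarrow> (nat \<Rightarrow> 'a) set \<Rightarrow> (nat \<Rightarrow> 'a) set" where
  "span_over C S = {v. \<exists>T c. finite T \<and> T \<subseteq> S \<and> (\<forall>w\<in>T. c w \<in> C)
                         \<and> v = (\<lambda>i. \<Sum>w\<in>T. c w * w i)}"

definition indep_over :: "'a::field set \<Rightarrow> (nat \<Rightarrow> 'a) set \<Rightarrow> bool" where
  "indep_over C B \<longleftrightarrow> finite B \<and> (\<forall>c. (\<forall>w\<in>B. c w \<in> C) \<and> (\<lambda>i. \<Sum>w\<in>B. c w * w i) = (\<lambda>i. 0)
                         \<longrightarrow> (\<forall>w\<in>B. c w = 0))"

definition subspace_over :: "'a::field set \<Rightarrow> nat \<Rightarrow> (nat \<Rightarrow> 'a) set \<Rightarrow> bool" where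
  "subspace_over C k W \<longleftrightarrow> W \<subseteq> vecs k \<and> (\<lambda>i. 0) \<in> W
     \<and> (\<forall>u\<in>W. \<forall>v\<in>W. (\<lambda>i. u i + v i) \<in> W) \<and> (\<forall>a\<in>C. \<forall>u\<in>W. (\<lambda>i. a * u i) \<in> W)"

definition has_dim_over :: "'a::field set \<Rightarrow> (nat \<Rightarrow> 'a) set \<Rightarrow> nat \<Rightarrow> bool" where
  "has_dim_over C W d \<longleftrightarrow> (\<exists>B. B \<subseteq> W \<and> indep_over C B \<and> span_over C B = W \<and> card B = d)"

definition dim_over :: "'a::field set \<Rightarrow> (nat \<Rightarrow> 'a) set \<Rightarrow> nat" where
  "dim_over C W = (LEAST d. has_dim_over C W d)"

definition is_system :: "'a::field set \<Rightarrow> nat \<Rightarrow> nat \<Rightarrow> (nat \<Rightarrow> 'a) set \<Rightarrow> bool" where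
  "is_system K n k U \<longleftrightarrow> subspace_over K k U \<and> has_dim_over K U n \<and> span_over UNIV U = vecs k"

definition is_hyperplane :: "nat \<Rightarrow> (nat \<Rightarrow> 'a::field) set \<Rightarrow> bool" where
  "is_hyperplane k H \<longleftrightarrow> subspace_over UNIV k H \<and> (\<exists>d. has_dim_over UNIV H d \<and> int d = int k - 1)"

definition is_cutting :: "nat \<Rightarrow> (nat \<Rightarrow> 'a::field) set \<Rightarrow> bool" where
  "is_cutting k U \<longleftrightarrow> (\<forall>H. is_hyperplane k H \<longrightarrow> span_over UNIV (H \<inter> U) = H)"

definition is_evasive :: "'a::field set \<Rightarrow> nat \<Rightarrow> int \<Rightarrow> int \<Rightarrow> (nat \<Rightarrow> 'a) set \<Rightarrow> bool" where
  "is_evasive K k h r U \<longleftrightarrow> (\<forall>H d. subspace_over UNIV k H \<and> has_dim_over UNIV H d \<and> int d = h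
       \<longrightarrow> int (dim_over K (U \<inter> H)) \<le> r)"

definition direct_sum :: "nat \<Rightarrow> (nat \<Rightarrow> 'a::field) set \<Rightarrow> (nat \<Rightarrow> 'a) set \<Rightarrow> (nat \<Rightarrow> 'a) set" where
  "direct_sum k1 U1 U2 = {(\<lambda>i. if i < k1 then u1 i else u2 (i - k1)) | u1 u2. u1 \<in> U1 \<and> u2 \<in> U2}"

end

theory Submission imports Defs "HOL-Library.Function_Algebras" "HOL-Library.FuncSet" begin

definition sm :: "'a::field \<Rightarrow> (nat \<Rightarrow> 'a) \<Rightarrow> nat \<Rightarrow> 'a" where
  "sm c v = (\<lambda>i. c * v i)"

definition cl :: "'a::field set \<Rightarrow> (nat \<Rightarrow> 'a) set \<Rightarrow> bool" where
  "cl C W \<longleftrightarrow> 0 \<in> W \<and> (\<forall>u\<in>W. \<forall>v\<in>W. u + v \<in> W) \<and> (\<forall>a\<in>C. \<forall>u\<in>W. sm a u \<in> W)"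

lemma sum_fun_apply: "(sum f A) x = sum (\<lambda>a. f a x) A"
  by (induction A rule: infinite_finite_induct) auto

lemma sm_apply[simp]: "sm c v i = c * v i" by (simp add: sm_def)

lemma subspace_cl: "subspace_over C k W \<longleftrightarrow> W \<subseteq> vecs k \<and> cl C W"
  unfolding subspace_over_def cl_def sm_def by (auto simp: plus_fun_def zero_fun_def)

lemma subfieldD:
  assumes "is_subfield K"
  shows "0 \<in> K" "1 \<in> K" "x \<in> K \<Longrightarrow> y \<in> K \<Longrightarrow> x + y \<in> K" "x \<in> K \<Longrightarrow> y \<in> K \<Longrightarrow> x * y \<in> K"
    "x \<in> K \<Longrightarrow> - x \<in> K" "x \<in> K \<Longrightarrow> x \<noteq> 0 \<Longrightarrow> inverse x \<in> K"
  using assms unfolding is_subfield_def by auto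

lemma subfield_UNIV: "is_subfield UNIV" by (simp add: is_subfield_def)

lemma cl_diff: assumes "cl C W" "is_subfield C" "u \<in> W" "v \<in> W" shows "u - v \<in> W"
proof -
  have "- 1 \<in> C" using subfieldD[OF assms(2)] by auto
  then have "sm (-1) v \<in> W" using assms unfolding cl_def by auto
  then have "u + sm (-1) v \<in> W" using assms unfolding cl_def by auto
  moreover have "u + sm (-1) v = u - v" by (simp add: fun_eq_iff)
  ultimately show ?thesis by simp
qed

lemma cl_sum: assumes "cl C W" "finite T" "\<And>w. w \<in> T \<Longrightarrow> c w \<in> C" "T \<subseteq> W"
  shows "(\<lambda>i. \<Sum>w\<in>T. c w * w i) \<in> W"
  using assms(2-4)
proof (induction T rule: finite_induct)
  case empty then show ?case using assms(1) by (simp add: cl_def zero_fun_def)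
next
  case (insert x F)
  have "sm (c x) x \<in> W" using insert assms(1) unfolding cl_def by auto
  moreover have "(\<lambda>i. \<Sum>w\<in>F. c w * w i) \<in> W" using insert by auto
  ultimately have "sm (c x) x + (\<lambda>i. \<Sum>w\<in>F. c w * w i) \<in> W" using assms(1) unfolding cl_def by auto
  moreover have "sm (c x) x + (\<lambda>i. \<Sum>w\<in>F. c w * w i) = (\<lambda>i. \<Sum>w\<in>insert x F. c w * w i)"
    using insert by (simp add: fun_eq_iff)
  ultimately show ?case by simp
qed

lemma span_least: "cl C W \<Longrightarrow> X \<subseteq> W \<Longrightarrow> span_over C X \<subseteq> W"
  unfolding span_over_def using cl_sum[of C W] by blast

lemma span_sub: assumes "is_subfield C" "x \<in> X" shows "x \<in> span_over C X"
proof -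
  have "x = (\<lambda>i. \<Sum>w\<in>{x}. (\<lambda>_. 1) w * w i)" by simp
  then show ?thesis unfolding span_over_def using assms subfieldD(2)[OF assms(1)]
    by (intro CollectI exI[of _ "{x}"] exI[of _ "\<lambda>_. 1"]) auto
qed

lemma span_cl: assumes C: "is_subfield C" shows "cl C (span_over C X)"
  unfolding cl_def
proof (intro conjI ballI)
  show "0 \<in> span_over C X" unfolding span_over_def
    by (intro CollectI exI[of _ "{}"]) (auto simp: zero_fun_def)
next
  fix u v assume "u \<in> span_over C X" "v \<in> span_over C X"
  then obtain T1 c1 T2 c2 where 1: "finite T1" "T1 \<subseteq> X" "\<forall>w\<in>T1. c1 w \<in> C" "u = (\<lambda>i. \<Sum>w\<in>T1. c1 w * w i)"
    and 2: "finite T2" "T2 \<subseteq> X" "\<forall>w\<in>T2. c2 w \<in> C" "v = (\<lambda>i. \<Sum>w\<in>T2. c2 w * w i)"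
    unfolding span_over_def by blast
  define c where "c w = (if w \<in> T1 then c1 w else 0) + (if w \<in> T2 then c2 w else 0)" for w
  have cC: "\<forall>w\<in>T1 \<union> T2. c w \<in> C" unfolding c_def using 1 2 subfieldD[OF C] by auto
  have e: "u + v = (\<lambda>i. \<Sum>w\<in>T1 \<union> T2. c w * w i)"
  proof -
    have a: "(\<Sum>w\<in>T1 \<union> T2. (if w \<in> T1 then c1 w else 0) * w i) = (\<Sum>w\<in>T1. c1 w * w i)" for i
      by (rule sum.mono_neutral_cong_right) (use 1 2 in auto)
    have b: "(\<Sum>w\<in>T1 \<union> T2. (if w \<in> T2 then c2 w else 0) * w i) = (\<Sum>w\<in>T2. c2 w * w i)" for i
      by (rule sum.mono_neutral_cong_right) (use 1 2 in auto)
    show ?thesis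
    proof (rule ext)
      fix i
      have "(\<Sum>w\<in>T1 \<union> T2. c w * w i) = (\<Sum>w\<in>T1 \<union> T2. (if w \<in> T1 then c1 w else 0) * w i + (if w \<in> T2 then c2 w else 0) * w i)"
        by (rule sum.cong) (simp_all only: c_def distrib_right)
      also have "\<dots> = (\<Sum>w\<in>T1. c1 w * w i) + (\<Sum>w\<in>T2. c2 w * w i)"
        by (simp only: sum.distrib a b)
      finally show "(u + v) i = (\<Sum>w\<in>T1 \<union> T2. c w * w i)" using 1 2 by simp
    qed
  qed
  show "u + v \<in> span_over C X" unfolding span_over_def
    by (rule CollectI, rule exI[of _ "T1 \<union> T2"], rule exI[of _ c]) (use 1 2 cC e in simp)
next
  fix a u assume a: "a \<in> C" and "u \<in> span_over C X"
  then obtain T1 c1 where 1: "finite T1" "T1 \<subseteq> X" "\<forall>w\<in>T1. c1 w \<in> C" "u = (\<lambda>i. \<Sum>w\<in>T1. c1 w * w i)"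
    unfolding span_over_def by blast
  have cC: "\<forall>w\<in>T1. a * c1 w \<in> C" using 1 a subfieldD[OF C] by auto
  have e: "sm a u = (\<lambda>i. \<Sum>w\<in>T1. (a * c1 w) * w i)" using 1
    by (simp add: fun_eq_iff sum_distrib_left mult.assoc)
  show "sm a u \<in> span_over C X" unfolding span_over_def
    by (rule CollectI, rule exI[of _ "T1"], rule exI[of _ "\<lambda>w. a * c1 w"]) (use 1 cC e in simp)
qed

lemma span_vecs: assumes "is_subfield C" "X \<subseteq> vecs k" shows "span_over C X \<subseteq> vecs k"
  by (rule span_least) (use assms in \<open>auto simp: cl_def vecs_def\<close>)


lemma indep_insert:
  assumes C: "is_subfield C" and B: "indep_over C B" and w: "w \<notin> span_over C B"
  shows "indep_over C (insert w B)"
proof -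
  have fB: "finite B" using B unfolding indep_over_def by auto
  have wB: "w \<notin> B" using w span_sub[OF C] by blast
  show ?thesis unfolding indep_over_def
  proof (intro conjI allI impI)
    show "finite (insert w B)" using fB by simp
    fix c assume H: "(\<forall>v\<in>insert w B. c v \<in> C) \<and> (\<lambda>i. \<Sum>v\<in>insert w B. c v * v i) = (\<lambda>i. 0)"
    then have cC: "\<And>v. v \<in> insert w B \<Longrightarrow> c v \<in> C" by auto
    have eq: "c w * w i + (\<Sum>v\<in>B. c v * v i) = 0" for i
    proof -
      have "(\<Sum>v\<in>insert w B. c v * v i) = 0" using fun_cong[OF conjunct2[OF H], of i] by simp
      then show ?thesis using fB wB by simp
    qed
    have cw: "c w = 0"
    proof (rule ccontr)
      assume nz: "c w \<noteq> 0"
      have "w = (\<lambda>i. \<Sum>v\<in>B. (- c v * inverse (c w)) * v i)"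
      proof (rule ext)
        fix i
        have "c w * w i = - (\<Sum>v\<in>B. c v * v i)" using eq[of i] by (simp add: eq_neg_iff_add_eq_0)
        moreover have "w i = inverse (c w) * (c w * w i)" using nz by simp
        ultimately have "w i = - inverse (c w) * (\<Sum>v\<in>B. c v * v i)" by simp
        also have "\<dots> = (\<Sum>v\<in>B. (- c v * inverse (c w)) * v i)"
          by (simp add: sum_distrib_left mult_ac)
        finally show "w i = (\<Sum>v\<in>B. (- c v * inverse (c w)) * v i)" .
      qed
      moreover have "\<forall>v\<in>B. - c v * inverse (c w) \<in> C"
        using cC subfieldD[OF C] nz by auto
      ultimately have "w \<in> span_over C B" unfolding span_over_def
        by (intro CollectI exI[of _ B] exI[of _ "\<lambda>v. - c v * inverse (c w)"]) (use fB in simp)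
      then show False using w by simp
    qed
    have "(\<lambda>i. \<Sum>v\<in>B. c v * v i) = (\<lambda>i. 0)" using eq cw by simp
    then have "\<forall>v\<in>B. c v = 0" using B cC unfolding indep_over_def by auto
    then show "\<forall>v\<in>insert w B. c v = 0" using cw by simp
  qed
qed

lemma indepD: "indep_over C B \<Longrightarrow> \<forall>w\<in>B. c w \<in> C \<Longrightarrow> (\<lambda>i. \<Sum>w\<in>B. c w * w i) = (\<lambda>i. 0) \<Longrightarrow> \<forall>w\<in>B. c w = 0"
  unfolding indep_over_def by blast

lemma indep_empty: "indep_over C {}" by (simp add: indep_over_def)

lemma basis_exists:
  assumes C: "is_subfield C" and fW: "finite W" and W: "cl C W"
  shows "\<exists>B. B \<subseteq> W \<and> indep_over C B \<and> span_over C B = W"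
proof -
  define S where "S = {B. B \<subseteq> W \<and> indep_over C B}"
  have fS: "finite S" unfolding S_def using fW by (auto intro: finite_subset[of _ "Pow W"])
  have "{} \<in> S" unfolding S_def by (simp add: indep_empty)
  then have ne: "card ` S \<noteq> {}" by auto
  obtain B where BS: "B \<in> S" and cB: "card B = Max (card ` S)"
    using Max_in[OF finite_imageI[OF fS] ne] by auto
  have mx: "\<And>B'. B' \<in> S \<Longrightarrow> card B' \<le> card B" using cB fS by simp
  have sub: "span_over C B \<subseteq> W" using span_least[OF W] BS unfolding S_def by auto
  have "W \<subseteq> span_over C B"
  proof
    fix w assume wW: "w \<in> W"
    show "w \<in> span_over C B"
    proof (rule ccontr)
      assume nw: "w \<notin> span_over C B"
      then have "insert w B \<in> S" using indep_insert[OF C _ nw] BS wW unfolding S_def by auto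
      then have "card (insert w B) \<le> card B" by (rule mx)
      moreover have "w \<notin> B" using nw span_sub[OF C] by blast
      moreover have "finite B" using BS unfolding S_def indep_over_def by auto
      ultimately show False by simp
    qed
  qed
  then show ?thesis using sub BS unfolding S_def by auto
qed

lemma card_span_indep:
  assumes C: "is_subfield C" and fC: "finite C" and B: "indep_over C B"
  shows "card (span_over C B) = card C ^ card B"
proof -
  have fB: "finite B" using B unfolding indep_over_def by auto
  define f where "f g = (\<lambda>i. \<Sum>w\<in>B. g w * w i)" for g :: "(nat \<Rightarrow> 'a) \<Rightarrow> 'a"
  have img: "span_over C B = f ` (B \<rightarrow>\<^sub>E C)"
  proof
    show "span_over C B \<subseteq> f ` (B \<rightarrow>\<^sub>E C)"
    proof
      fix v assume "v \<in> span_over C B"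
      then obtain T c where T: "finite T" "T \<subseteq> B" "\<forall>w\<in>T. c w \<in> C" "v = (\<lambda>i. \<Sum>w\<in>T. c w * w i)"
        unfolding span_over_def by blast
      define g where "g w = (if w \<in> B then (if w \<in> T then c w else 0) else undefined)" for w
      have "g \<in> B \<rightarrow>\<^sub>E C" unfolding g_def using T subfieldD[OF C] by auto
      moreover have "f g = v"
      proof (rule ext)
        fix i
        have "(\<Sum>w\<in>B. g w * w i) = (\<Sum>w\<in>T. c w * w i)"
          by (rule sum.mono_neutral_cong_right) (use T fB in \<open>auto simp: g_def\<close>)
        then show "f g i = v i" using T by (simp add: f_def)
      qed
      ultimately show "v \<in> f ` (B \<rightarrow>\<^sub>E C)" by blast
    qed
  next
    show "f ` (B \<rightarrow>\<^sub>E C) \<subseteq> span_over C B"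
    proof
      fix v assume "v \<in> f ` (B \<rightarrow>\<^sub>E C)"
      then obtain g where g: "g \<in> B \<rightarrow>\<^sub>E C" "v = f g" by auto
      show "v \<in> span_over C B" unfolding span_over_def
        by (rule CollectI, rule exI[of _ B], rule exI[of _ g]) (use g fB in \<open>auto simp: f_def\<close>)
    qed
  qed
  have inj: "inj_on f (B \<rightarrow>\<^sub>E C)"
  proof (rule inj_onI)
    fix g h assume g: "g \<in> B \<rightarrow>\<^sub>E C" and h: "h \<in> B \<rightarrow>\<^sub>E C" and e: "f g = f h"
    have "(\<lambda>i. \<Sum>w\<in>B. (g w + - h w) * w i) = (\<lambda>i. 0)"
    proof (rule ext)
      fix i
      have "f g i = f h i" using e by simp
      then show "(\<Sum>w\<in>B. (g w + - h w) * w i) = 0"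
        by (simp add: f_def algebra_simps sum_subtractf)
    qed
    moreover have "\<forall>w\<in>B. g w + - h w \<in> C" using g h subfieldD(3)[OF C] subfieldD(5)[OF C] by (metis PiE_mem)
    ultimately have "\<forall>w\<in>B. g w + - h w = 0" using indepD[OF B, of "\<lambda>w. g w + - h w"] by simp
    then have "\<forall>w\<in>B. g w = h w" by (simp add: add_eq_0_iff2)
    then show "g = h" using g h by (auto intro: PiE_ext)
  qed
  have "card (span_over C B) = card (B \<rightarrow>\<^sub>E C)" using img card_image[OF inj] by simp
  also have "\<dots> = card C ^ card B" by (simp add: card_PiE fB)
  finally show ?thesis .
qed

lemma has_dim_card:
  assumes C: "is_subfield C" and fC: "finite C" and "has_dim_over C W d"
  shows "card W = card C ^ d"
  using assms card_span_indep[OF C fC] unfolding has_dim_over_def by auto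

lemma vecs_image: "vecs k = (\<lambda>f i. if i < k then f i else 0) ` ({..<k} \<rightarrow>\<^sub>E (UNIV::'a::field set))"
proof
  show "vecs k \<subseteq> (\<lambda>f i. if i < k then f i else 0) ` ({..<k} \<rightarrow>\<^sub>E (UNIV::'a set))"
  proof
    fix v :: "nat \<Rightarrow> 'a" assume v: "v \<in> vecs k"
    have "v = (\<lambda>i. if i < k then restrict v {..<k} i else 0)"
    proof (rule ext)
      fix i show "v i = (if i < k then restrict v {..<k} i else 0)"
        using v unfolding vecs_def by (cases "i < k") auto
    qed
    moreover have "restrict v {..<k} \<in> {..<k} \<rightarrow>\<^sub>E (UNIV::'a set)" by simp
    ultimately show "v \<in> (\<lambda>f i. if i < k then f i else 0) ` ({..<k} \<rightarrow>\<^sub>E (UNIV::'a set))"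
      by (rule image_eqI)
  qed
next
  show "(\<lambda>f i. if i < k then f i else 0) ` ({..<k} \<rightarrow>\<^sub>E (UNIV::'a set)) \<subseteq> vecs k"
    unfolding vecs_def by (rule image_subsetI) simp
qed

lemma inj_vecs: "inj_on (\<lambda>f i. if i < k then f i else (0::'a::field)) ({..<k::nat} \<rightarrow>\<^sub>E (UNIV::'a set))"
proof (rule inj_onI)
  fix f g :: "nat \<Rightarrow> 'a" assume f: "f \<in> {..<k} \<rightarrow>\<^sub>E UNIV" and g: "g \<in> {..<k} \<rightarrow>\<^sub>E UNIV"
    and e: "(\<lambda>i. if i < k then f i else 0) = (\<lambda>i. if i < k then g i else 0)"
  have "\<forall>i\<in>{..<k}. f i = g i"
  proof
    fix i assume "i \<in> {..<k}"
    then show "f i = g i" using fun_cong[OF e, of i] by simp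
  qed
  then show "f = g" using f g by (auto intro: PiE_ext)
qed

lemma card_vecs: "card (vecs k :: (nat \<Rightarrow> 'a::{field,finite}) set) = card (UNIV::'a set) ^ k"
  and finite_vecs: "finite (vecs k :: (nat \<Rightarrow> 'a::{field,finite}) set)"
proof -
  have "card (vecs k :: (nat \<Rightarrow> 'a) set) = card ({..<k} \<rightarrow>\<^sub>E (UNIV::'a set))"
    by (subst vecs_image, rule card_image[OF inj_vecs])
  also have "\<dots> = card (UNIV::'a set) ^ k" by (simp add: card_PiE)
  finally show "card (vecs k :: (nat \<Rightarrow> 'a) set) = card (UNIV::'a set) ^ k" .
  show "finite (vecs k :: (nat \<Rightarrow> 'a) set)" by (subst vecs_image) (intro finite_imageI finite_PiE; simp)
qed


lemma card_fibers:
  fixes G :: "'b::ab_group_add set" and \<phi> :: "'b \<Rightarrow> 'c::ab_group_add"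
  assumes fG: "finite G" and dG: "\<forall>u\<in>G. \<forall>v\<in>G. u - v \<in> G" and aG: "\<forall>u\<in>G. \<forall>v\<in>G. u + v \<in> G"
    and lin: "\<forall>u\<in>G. \<forall>v\<in>G. \<phi> (u + v) = \<phi> u + \<phi> v"
  shows "card G = card (\<phi> ` G) * card {g\<in>G. \<phi> g = 0}"
proof -
  have ex: "\<forall>a\<in>\<phi> ` G. \<exists>g\<in>G. \<phi> g = a" by auto
  then obtain s where s: "\<And>a. a \<in> \<phi> ` G \<Longrightarrow> s a \<in> G \<and> \<phi> (s a) = a" by metis
  have ldiff: "\<phi> (u - v) = \<phi> u - \<phi> v" if "u \<in> G" "v \<in> G" for u v
  proof -
    have "\<phi> u = \<phi> ((u - v) + v)" by simp
    also have "\<dots> = \<phi> (u - v) + \<phi> v" using lin dG that by blast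
    finally show ?thesis by (simp add: algebra_simps)
  qed
  define F where "F g = (\<phi> g, g - s (\<phi> g))" for g
  have inj: "inj_on F G"
  proof (rule inj_onI)
    fix g g' assume "g \<in> G" "g' \<in> G" "F g = F g'"
    then show "g = g'" unfolding F_def by auto
  qed
  have img: "F ` G = \<phi> ` G \<times> {g\<in>G. \<phi> g = 0}"
  proof
    show "F ` G \<subseteq> \<phi> ` G \<times> {g\<in>G. \<phi> g = 0}"
    proof
      fix y assume "y \<in> F ` G"
      then obtain g where g: "g \<in> G" "y = F g" by auto
      have sg: "s (\<phi> g) \<in> G" "\<phi> (s (\<phi> g)) = \<phi> g" using s g by auto
      have "g - s (\<phi> g) \<in> G" using dG g sg by blast
      moreover have "\<phi> (g - s (\<phi> g)) = 0" using ldiff[OF g(1) sg(1)] sg by simp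
      ultimately show "y \<in> \<phi> ` G \<times> {g\<in>G. \<phi> g = 0}" using g unfolding F_def by auto
    qed
  next
    show "\<phi> ` G \<times> {g\<in>G. \<phi> g = 0} \<subseteq> F ` G"
    proof
      fix y assume "y \<in> \<phi> ` G \<times> {g\<in>G. \<phi> g = 0}"
      then obtain a h where y: "y = (a, h)" "a \<in> \<phi> ` G" "h \<in> G" "\<phi> h = 0" by auto
      have sa: "s a \<in> G" "\<phi> (s a) = a" using s y by auto
      have hG: "h + s a \<in> G" using aG y sa by blast
      have ph: "\<phi> (h + s a) = a" using lin y sa by simp
      have "F (h + s a) = y" unfolding F_def using ph y by simp
      then show "y \<in> F ` G" using hG by blast
    qed
  qed
  have "card G = card (F ` G)" using card_image[OF inj] by simp
  also have "\<dots> = card (\<phi> ` G) * card {g\<in>G. \<phi> g = 0}" using img by (simp add: card_cartesian_product)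
  finally show ?thesis .
qed

lemma pigeon:
  fixes A B :: "'c::{ab_group_add,finite} set"
  assumes "card A * card B > card (UNIV::'c set)"
  shows "\<exists>a\<in>A. \<exists>a'\<in>A. \<exists>b\<in>B. \<exists>b'\<in>B. a \<noteq> a' \<and> a + b = a' + b'"
proof -
  have "\<not> inj_on (\<lambda>(a, b). a + b) (A \<times> B)"
  proof
    assume i: "inj_on (\<lambda>(a, b). a + b) (A \<times> B)"
    have "card ((\<lambda>(a, b). a + b) ` (A \<times> B)) = card A * card B"
      using card_image[OF i] by (simp add: card_cartesian_product)
    moreover have "card ((\<lambda>(a, b). a + b) ` (A \<times> B)) \<le> card (UNIV::'c set)"
      by (rule card_mono) auto
    ultimately show False using assms by simp
  qed
  then obtain a b a' b' where "a \<in> A" "b \<in> B" "a' \<in> A" "b' \<in> B" "(a, b) \<noteq> (a', b')" "a + b = a' + b'"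
    unfolding inj_on_def by auto
  then show ?thesis by (metis add_left_cancel)
qed

definition join :: "nat \<Rightarrow> (nat \<Rightarrow> 'a) \<Rightarrow> (nat \<Rightarrow> 'a) \<Rightarrow> nat \<Rightarrow> 'a" where
  "join k u w = (\<lambda>i. if i < k then u i else w (i - k))"

definition pl :: "nat \<Rightarrow> (nat \<Rightarrow> 'a::zero) \<Rightarrow> nat \<Rightarrow> 'a" where
  "pl k v = (\<lambda>i. if i < k then v i else 0)"

definition pr :: "nat \<Rightarrow> (nat \<Rightarrow> 'a) \<Rightarrow> nat \<Rightarrow> 'a" where
  "pr k v = (\<lambda>i. v (i + k))"

lemma direct_sum_join: "direct_sum k U1 U2 = (\<lambda>(u, w). join k u w) ` (U1 \<times> U2)"
  unfolding direct_sum_def join_def by auto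

lemma join_add: "join k (u + u') (w + w') = join k u w + (join k u' w' :: nat \<Rightarrow> 'a::plus)"
  by (simp add: join_def fun_eq_iff)

lemma join_sm: "sm c (join k u w) = join k (sm c u) (sm c w)"
  by (simp add: join_def fun_eq_iff)

lemma join_zero: "join k 0 0 = (0 :: nat \<Rightarrow> 'a::zero)"
  by (simp add: join_def fun_eq_iff)

lemma join_split: "join k u w = join k u 0 + (join k 0 w :: nat \<Rightarrow> 'a::monoid_add)"
  by (simp add: join_def fun_eq_iff)

lemma join_vecs: "u \<in> vecs k1 \<Longrightarrow> w \<in> vecs k2 \<Longrightarrow> join k1 u w \<in> vecs (k1 + k2)"
  by (auto simp: join_def vecs_def)

lemma pl_vecs: "pl k1 v \<in> vecs k1" by (simp add: pl_def vecs_def)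
lemma pr_vecs: "v \<in> vecs (k1 + k2) \<Longrightarrow> pr k1 v \<in> vecs k2" by (simp add: pr_def vecs_def)

lemma join_pl_pr: "v \<in> vecs (k1 + k2) \<Longrightarrow> join k1 (pl k1 v) (pr k1 v) = v"
  by (auto simp: join_def pl_def pr_def fun_eq_iff)

lemma pl_join: "u \<in> vecs k \<Longrightarrow> pl k (join k u w) = u"
  by (auto simp: join_def pl_def vecs_def fun_eq_iff)

lemma join_inj: assumes "u \<in> vecs k" "u' \<in> vecs k" "join k u w = join k u' w'"
  shows "u = u' \<and> w = w'"
proof
  show "u = u'" using pl_join[OF assms(1), of w] pl_join[OF assms(2), of w'] assms(3) by simp
  show "w = w'"
  proof
    fix i show "w i = w' i" using fun_cong[OF assms(3), of "i + k"] by (simp add: join_def)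
  qed
qed

lemma cl_vecs: "cl C (vecs k)" by (auto simp: cl_def vecs_def)


lemma card_field_ge2: "2 \<le> card (UNIV :: 'a::{field,finite} set)"
proof -
  have "card {0, 1::'a} \<le> card (UNIV :: 'a set)" by (rule card_mono) auto
  then show ?thesis by simp
qed

lemma subfield_card_ge2: assumes "is_subfield K" "finite (K::'a::field set)" shows "2 \<le> card K"
proof -
  have "card {0, 1::'a} \<le> card K" by (rule card_mono) (use assms subfieldD[OF assms(1)] in auto)
  then show ?thesis by simp
qed

lemma vecs_diff: "u \<in> vecs k \<Longrightarrow> v \<in> vecs k \<Longrightarrow> u - v \<in> vecs k" by (simp add: vecs_def)
lemma vecs_add: "u \<in> vecs k \<Longrightarrow> v \<in> vecs k \<Longrightarrow> u + v \<in> vecs k" by (simp add: vecs_def)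
lemma vecs_sm: "u \<in> vecs k \<Longrightarrow> sm c u \<in> vecs k" by (simp add: vecs_def)
lemma vecs_zero: "0 \<in> vecs k" by (simp add: vecs_def)

lemma functional_hyperplane:
  fixes \<phi> :: "(nat \<Rightarrow> 'a::{field,finite}) \<Rightarrow> 'a"
  assumes add: "\<forall>u\<in>vecs k. \<forall>v\<in>vecs k. \<phi> (u + v) = \<phi> u + \<phi> v"
    and hom: "\<forall>c. \<forall>u\<in>vecs k. \<phi> (sm c u) = c * \<phi> u"
    and nz: "v0 \<in> vecs k" "\<phi> v0 \<noteq> 0"
  shows "is_hyperplane k {u\<in>vecs k. \<phi> u = 0}"
proof -
  define H where "H = {u\<in>vecs k. \<phi> u = 0}"
  have z: "\<phi> 0 = 0"
  proof -
    have "sm 0 v0 = 0" by (simp add: fun_eq_iff)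
    then show ?thesis using hom nz by (metis mult_zero_left)
  qed
  have sub: "subspace_over UNIV k H" unfolding subspace_cl cl_def H_def
    using z add hom vecs_zero vecs_add vecs_sm by auto
  have surj: "\<phi> ` vecs k = UNIV"
  proof -
    have "a \<in> \<phi> ` vecs k" for a
    proof -
      have "\<phi> (sm (a / \<phi> v0) v0) = a" using hom nz by simp
      then show ?thesis using vecs_sm[OF nz(1)] by (metis image_eqI)
    qed
    then show ?thesis by auto
  qed
  have "card (UNIV::'a set) ^ k = card (vecs k :: (nat \<Rightarrow> 'a) set)" by (rule card_vecs[symmetric])
  also have "card (vecs k :: (nat \<Rightarrow> 'a) set) = card (\<phi> ` vecs k) * card {g\<in>vecs k. \<phi> g = 0}"
    by (rule card_fibers) (use finite_vecs vecs_diff vecs_add add in auto)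
  also have "\<dots> = card (UNIV::'a set) * card H" using surj unfolding H_def by simp
  finally have c1: "card (UNIV::'a set) ^ k = card (UNIV::'a set) * card H" .
  have fH: "finite H" unfolding H_def by (rule finite_subset[OF _ finite_vecs]) auto
  obtain B where B: "B \<subseteq> H" "indep_over UNIV B" "span_over UNIV B = H"
    using basis_exists[OF subfield_UNIV fH] sub unfolding subspace_cl by blast
  have "card H = card (UNIV::'a set) ^ card B" using card_span_indep[OF subfield_UNIV _ B(2)] B(3) by simp
  then have "card (UNIV::'a set) ^ k = card (UNIV::'a set) ^ Suc (card B)" using c1 by simp
  then have k: "k = Suc (card B)" using card_field_ge2[where 'a='a] power_inject_exp by (metis Suc_1 Suc_le_lessD)
  have "has_dim_over UNIV H (card B)" unfolding has_dim_over_def using B by blast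
  then show ?thesis using sub k unfolding is_hyperplane_def H_def by auto
qed

lemma hyperplane_functional:
  fixes H :: "(nat \<Rightarrow> 'a::{field,finite}) set"
  assumes "is_hyperplane k H"
  shows "\<exists>lam. (\<forall>u\<in>vecs k. \<forall>v\<in>vecs k. lam (u + v) = lam u + lam v) \<and> (\<forall>c. \<forall>u\<in>vecs k. lam (sm c u) = c * lam u)
           \<and> (\<forall>v\<in>vecs k. lam v = 0 \<longleftrightarrow> v \<in> H)"
proof -
  obtain d where sub: "subspace_over UNIV k H" and hd: "has_dim_over UNIV H d" and d: "int d = int k - 1"
    using assms unfolding is_hyperplane_def by blast
  have Hv: "H \<subseteq> vecs k" and clH: "cl UNIV H" using sub unfolding subspace_cl by auto
  have k: "k = Suc d" using d by linarith
  let ?Q = "card (UNIV::'a set)"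
  have Q2: "2 \<le> ?Q" by (rule card_field_ge2)
  have cH: "card H = ?Q ^ d" using has_dim_card[OF subfield_UNIV _ hd] by simp
  have "card H < card (vecs k :: (nat \<Rightarrow> 'a) set)"
  proof -
    have "?Q ^ d < ?Q ^ Suc d" using Q2 by simp
    then show ?thesis using cH card_vecs[where 'a='a, of k] k by simp
  qed
  moreover have "finite H" by (rule finite_subset[OF Hv finite_vecs])
  ultimately have "\<not> vecs k \<subseteq> H" using card_mono not_le by metis
  then obtain x where x: "x \<in> vecs k" "x \<notin> H" by blast
  have smH: "sm c h \<in> H" if "h \<in> H" for c h using clH that unfolding cl_def by auto
  have addH: "h + h' \<in> H" if "h \<in> H" "h' \<in> H" for h h' using clH that unfolding cl_def by auto
  have diffH: "h - h' \<in> H" if "h \<in> H" "h' \<in> H" for h h' using cl_diff[OF clH subfield_UNIV that] .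
  have xH: "c = 0" if "sm c x \<in> H" for c
  proof (rule ccontr)
    assume "c \<noteq> 0"
    then have "x = sm (inverse c) (sm c x)" by (simp add: fun_eq_iff)
    then show False using smH[OF that] x by metis
  qed
  define g where "g p = fst p + sm (snd p) x" for p
  have inj: "inj_on g (H \<times> UNIV)"
  proof (rule inj_onI)
    fix p p' assume p: "p \<in> H \<times> UNIV" "p' \<in> H \<times> UNIV" "g p = g p'"
    have "sm (snd p - snd p') x = fst p' - fst p" using p(3) unfolding g_def
      by (simp add: fun_eq_iff algebra_simps)
    then have "sm (snd p - snd p') x \<in> H" using diffH p by auto
    then have "snd p = snd p'" using xH[of "snd p - snd p'"] by simp
    then show "p = p'" using p(3) unfolding g_def by (simp add: prod_eq_iff)
  qed
  have gsub: "g ` (H \<times> UNIV) \<subseteq> vecs k" unfolding g_def using Hv x by (auto intro!: vecs_add vecs_sm)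
  have "card (g ` (H \<times> UNIV)) = ?Q ^ d * ?Q" using card_image[OF inj] cH by (simp add: card_cartesian_product)
  then have "card (g ` (H \<times> UNIV)) = card (vecs k :: (nat \<Rightarrow> 'a) set)" using card_vecs[where 'a='a, of k] k by simp
  then have gim: "g ` (H \<times> UNIV) = vecs k" using card_subset_eq[OF finite_vecs gsub] by simp
  have "\<forall>v\<in>vecs k. \<exists>c. v - sm c x \<in> H"
  proof
    fix v :: "nat \<Rightarrow> 'a" assume "v \<in> vecs k"
    then obtain p where p: "p \<in> H \<times> UNIV" "v = g p" using gim by (metis imageE)
    then have "v - sm (snd p) x = fst p" unfolding g_def by simp
    then show "\<exists>c. v - sm c x \<in> H" using p by (intro exI[of _ "snd p"]) auto
  qed
  then obtain lam where lam: "\<And>v. v \<in> vecs k \<Longrightarrow> v - sm (lam v) x \<in> H" by metis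
  have uniq: "c = lam v" if "v \<in> vecs k" "v - sm c x \<in> H" for v c
  proof -
    have "(v - sm c x) - (v - sm (lam v) x) = sm (lam v - c) x" by (simp add: fun_eq_iff algebra_simps)
    then have "sm (lam v - c) x \<in> H" using diffH[OF that(2) lam[OF that(1)]] by simp
    then show ?thesis using xH[of "lam v - c"] by simp
  qed
  have 1: "\<forall>u\<in>vecs k. \<forall>v\<in>vecs k. lam (u + v) = lam u + lam v"
  proof (intro ballI)
    fix u v :: "nat \<Rightarrow> 'a" assume uv: "u \<in> vecs k" "v \<in> vecs k"
    have "(u + v) - sm (lam u + lam v) x = (u - sm (lam u) x) + (v - sm (lam v) x)"
      by (simp add: fun_eq_iff algebra_simps)
    then have "(u + v) - sm (lam u + lam v) x \<in> H" by (simp only: addH lam uv)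
    then show "lam (u + v) = lam u + lam v" using uniq vecs_add uv by metis
  qed
  have 2: "\<forall>c. \<forall>u\<in>vecs k. lam (sm c u) = c * lam u"
  proof (intro allI ballI)
    fix c and u :: "nat \<Rightarrow> 'a" assume u: "u \<in> vecs k"
    have "sm c u - sm (c * lam u) x = sm c (u - sm (lam u) x)"
      by (simp add: fun_eq_iff algebra_simps)
    then have "sm c u - sm (c * lam u) x \<in> H" by (simp only: smH lam u)
    then show "lam (sm c u) = c * lam u" using uniq vecs_sm u by metis
  qed
  have 3: "\<forall>v\<in>vecs k. lam v = 0 \<longleftrightarrow> v \<in> H"
  proof (intro ballI iffI)
    fix v :: "nat \<Rightarrow> 'a" assume "v \<in> vecs k" "lam v = 0"
    then show "v \<in> H" using lam[of v] by (simp add: sm_def zero_fun_def[symmetric])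
  next
    fix v :: "nat \<Rightarrow> 'a" assume v: "v \<in> vecs k" "v \<in> H"
    have "v - sm 0 x = v" by (simp add: fun_eq_iff)
    then show "lam v = 0" using uniq[OF v(1), of 0] v by simp
  qed
  show ?thesis using 1 2 3 by blast
qed


lemma cl_inter: "cl C U \<Longrightarrow> cl UNIV H \<Longrightarrow> cl C (U \<inter> H)"
  unfolding cl_def by auto

lemma image_count:
  fixes K :: "'a::{field,finite} set" and \<phi> :: "(nat \<Rightarrow> 'a) \<Rightarrow> 'a"
  assumes K: "is_subfield K" and sys: "is_system K n k U" and ev: "is_evasive K k (int k - 1) r U"
    and add: "\<forall>u\<in>vecs k. \<forall>v\<in>vecs k. \<phi> (u + v) = \<phi> u + \<phi> v"
    and hom: "\<forall>c. \<forall>u\<in>vecs k. \<phi> (sm c u) = c * \<phi> u"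
    and nz: "v0 \<in> vecs k" "\<phi> v0 \<noteq> 0"
  shows "\<exists>d. card (\<phi> ` U) * card K ^ d = card K ^ n \<and> int d \<le> r"
proof -
  define H where "H = {u\<in>vecs k. \<phi> u = 0}"
  have "is_hyperplane k H" unfolding H_def by (rule functional_hyperplane[OF add hom nz])
  then obtain dd where Hs: "subspace_over UNIV k H" and Hd: "has_dim_over UNIV H dd" and dd: "int dd = int k - 1"
    unfolding is_hyperplane_def by blast
  have le: "int (dim_over K (U \<inter> H)) \<le> r" using ev Hs Hd dd unfolding is_evasive_def by blast
  have Us: "subspace_over K k U" and Ud: "has_dim_over K U n" using sys unfolding is_system_def by auto
  have Uv: "U \<subseteq> vecs k" and clU: "cl K U" using Us unfolding subspace_cl by auto
  have clH: "cl UNIV H" using Hs unfolding subspace_cl by auto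
  have fK: "finite K" by simp
  have cU: "card U = card K ^ n" by (rule has_dim_card[OF K fK Ud])
  have fU: "finite U" by (rule finite_subset[OF Uv finite_vecs])
  have clZ: "cl K (U \<inter> H)" by (rule cl_inter[OF clU clH])
  obtain B where B: "B \<subseteq> U \<inter> H" "indep_over K B" "span_over K B = U \<inter> H"
    using basis_exists[OF K _ clZ] fU by blast
  have "has_dim_over K (U \<inter> H) (card B)" unfolding has_dim_over_def using B by blast
  then have hd: "has_dim_over K (U \<inter> H) (dim_over K (U \<inter> H))" unfolding dim_over_def by (rule LeastI)
  have cZ: "card (U \<inter> H) = card K ^ dim_over K (U \<inter> H)" by (rule has_dim_card[OF K fK hd])
  have "card U = card (\<phi> ` U) * card {g\<in>U. \<phi> g = 0}"
  proof (rule card_fibers[OF fU])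
    show "\<forall>u\<in>U. \<forall>v\<in>U. u - v \<in> U" using cl_diff[OF clU K] by blast
    show "\<forall>u\<in>U. \<forall>v\<in>U. u + v \<in> U" using clU unfolding cl_def by blast
    show "\<forall>u\<in>U. \<forall>v\<in>U. \<phi> (u + v) = \<phi> u + \<phi> v" using add Uv by blast
  qed
  moreover have "{g\<in>U. \<phi> g = 0} = U \<inter> H" unfolding H_def using Uv by auto
  ultimately have "card (\<phi> ` U) * card K ^ dim_over K (U \<inter> H) = card K ^ n" using cU cZ by simp
  then show ?thesis using le by blast
qed


lemma sm_zero[simp]: "sm c 0 = 0" by (simp add: fun_eq_iff)

lemma pr_join: "pr k (join k u w) = w" by (simp add: pr_def join_def)

lemma pl_add_sm: "pl k (a + sm c b) = pl k a + sm c (pl k b)" by (simp add: pl_def fun_eq_iff)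

lemma cl_preimage:
  assumes S: "cl C S" and fa: "\<And>u v. f (u + v) = f u + f v" and fs: "\<And>c u. f (sm c u) = sm c (f u)"
    and f0: "f 0 = 0"
  shows "cl C {u\<in>vecs k. f u \<in> S}"
  using S unfolding cl_def by (auto simp: fa fs f0 vecs_zero vecs_add vecs_sm)

lemma joinl_add: "join k (u + v) 0 = join k u 0 + (join k v 0 :: nat \<Rightarrow> 'a::monoid_add)"
  using join_add[of k u v 0 0] by simp
lemma joinr_add: "join k 0 (u + v) = join k 0 u + (join k 0 v :: nat \<Rightarrow> 'a::monoid_add)"
  using join_add[of k 0 0 u v] by simp
lemma joinl_sm: "join k (sm c u) 0 = sm c (join k u 0)" by (simp add: join_sm)
lemma joinr_sm: "join k 0 (sm c u) = sm c (join k 0 u)" by (simp add: join_sm)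

lemma system_part:
  fixes K :: "'a::{field,finite} set"
  assumes K: "is_subfield K" and sys1: "is_system K n1 k1 U1" and sys2: "is_system K n2 k2 U2"
  shows "is_system K (n1 + n2) (k1 + k2) (direct_sum k1 U1 U2)"
proof -
  define D where "D = direct_sum k1 U1 U2"
  have Dj: "D = (\<lambda>(u, w). join k1 u w) ` (U1 \<times> U2)" unfolding D_def by (rule direct_sum_join)
  have U1v: "U1 \<subseteq> vecs k1" and clU1: "cl K U1" and d1: "has_dim_over K U1 n1" and sp1: "span_over UNIV U1 = vecs k1"
    using sys1 unfolding is_system_def subspace_cl by auto
  have U2v: "U2 \<subseteq> vecs k2" and clU2: "cl K U2" and d2: "has_dim_over K U2 n2" and sp2: "span_over UNIV U2 = vecs k2"
    using sys2 unfolding is_system_def subspace_cl by auto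
  have z1: "0 \<in> U1" and z2: "0 \<in> U2" using clU1 clU2 unfolding cl_def by auto
  have fK: "finite K" by simp
  have Dv: "D \<subseteq> vecs (k1 + k2)" unfolding Dj using U1v U2v by (auto intro!: join_vecs)
  have clD: "cl K D" unfolding cl_def
  proof (intro conjI ballI)
    have "join k1 0 0 \<in> D" unfolding Dj using z1 z2 by auto
    then show "0 \<in> D" by (simp add: join_zero)
  next
    fix x y assume "x \<in> D" "y \<in> D"
    then obtain u w u' w' where "u \<in> U1" "w \<in> U2" "u' \<in> U1" "w' \<in> U2" "x = join k1 u w" "y = join k1 u' w'"
      unfolding Dj by auto
    moreover have "u + u' \<in> U1" "w + w' \<in> U2" using calculation clU1 clU2 unfolding cl_def by auto
    ultimately show "x + y \<in> D" unfolding Dj by (auto simp: join_add[symmetric])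
  next
    fix a x assume a: "a \<in> K" and "x \<in> D"
    then obtain u w where "u \<in> U1" "w \<in> U2" "x = join k1 u w" unfolding Dj by auto
    moreover have "sm a u \<in> U1" "sm a w \<in> U2" using calculation a clU1 clU2 unfolding cl_def by auto
    ultimately show "sm a x \<in> D" unfolding Dj by (auto simp: join_sm)
  qed
  have fD: "finite D" by (rule finite_subset[OF Dv finite_vecs])
  have inj: "inj_on (\<lambda>(u, w). join k1 u w) (U1 \<times> U2)"
    by (rule inj_onI) (use U1v in \<open>auto dest!: join_inj\<close>)
  have cD: "card D = card K ^ (n1 + n2)"
    unfolding Dj using card_image[OF inj] has_dim_card[OF K fK d1] has_dim_card[OF K fK d2]
    by (simp add: card_cartesian_product power_add)
  obtain B where B: "B \<subseteq> D" "indep_over K B" "span_over K B = D" using basis_exists[OF K fD clD] by blast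
  have "card D = card K ^ card B" using card_span_indep[OF K fK B(2)] B(3) by simp
  then have "card B = n1 + n2" using cD subfield_card_ge2[OF K fK] power_inject_exp
    by (metis Suc_1 Suc_le_lessD)
  then have hd: "has_dim_over K D (n1 + n2)" unfolding has_dim_over_def using B by blast
  define S where "S = span_over UNIV D"
  have clS: "cl UNIV S" unfolding S_def by (rule span_cl[OF subfield_UNIV])
  have DS: "D \<subseteq> S" unfolding S_def using span_sub[OF subfield_UNIV] by blast
  have "vecs k1 \<subseteq> {u\<in>vecs k1. join k1 u 0 \<in> S}"
  proof -
    have "cl UNIV {u\<in>vecs k1. join k1 u 0 \<in> S}"
      by (rule cl_preimage[OF clS]) (simp_all add: joinl_add joinl_sm join_zero)
    moreover have "U1 \<subseteq> {u\<in>vecs k1. join k1 u 0 \<in> S}" using U1v DS z2 unfolding Dj by auto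
    ultimately show ?thesis using span_least sp1 by metis
  qed
  moreover have "vecs k2 \<subseteq> {u\<in>vecs k2. join k1 0 u \<in> S}"
  proof -
    have "cl UNIV {u\<in>vecs k2. join k1 0 u \<in> S}"
      by (rule cl_preimage[OF clS]) (simp_all add: joinr_add joinr_sm join_zero)
    moreover have "U2 \<subseteq> {u\<in>vecs k2. join k1 0 u \<in> S}" using U2v DS z1 unfolding Dj by auto
    ultimately show ?thesis using span_least sp2 by metis
  qed
  ultimately have "vecs (k1 + k2) \<subseteq> S"
  proof -
    assume a1: "vecs k1 \<subseteq> {u\<in>vecs k1. join k1 u 0 \<in> S}" and a2: "vecs k2 \<subseteq> {u\<in>vecs k2. join k1 0 u \<in> S}"
    show ?thesis
    proof
      fix v :: "nat \<Rightarrow> 'a" assume v: "v \<in> vecs (k1 + k2)"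
      have "join k1 (pl k1 v) 0 \<in> S" using a1 pl_vecs by blast
      moreover have "join k1 0 (pr k1 v) \<in> S" using a2 pr_vecs[OF v] by blast
      ultimately have "join k1 (pl k1 v) 0 + join k1 0 (pr k1 v) \<in> S" using clS unfolding cl_def by blast
      then show "v \<in> S" using join_split[of k1 "pl k1 v" "pr k1 v"] join_pl_pr[OF v] by simp
    qed
  qed
  moreover have "S \<subseteq> vecs (k1 + k2)" unfolding S_def by (rule span_vecs[OF subfield_UNIV Dv])
  ultimately have "span_over UNIV D = vecs (k1 + k2)" unfolding S_def by blast
  then show ?thesis using hd Dv clD unfolding is_system_def subspace_cl D_def by blast
qed


lemma cutting_part:
  fixes K :: "'a::{field,finite} set"
  assumes K: "is_subfield K" and cK: "card K = q" and cF: "card (UNIV :: 'a set) = q ^ m"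
    and sys1: "is_system K n1 k1 U1" and cut1: "is_cutting k1 U1"
    and ev1: "is_evasive K k1 (int k1 - 1) (int n1 - int m - 1 + int t1) U1"
    and sys2: "is_system K n2 k2 U2" and cut2: "is_cutting k2 U2"
    and ev2: "is_evasive K k2 (int k2 - 1) (int n2 - int m - 1 + int t2) U2"
    and t: "t1 + t2 < m + 2"
    and H: "is_hyperplane (k1 + k2) H"
  shows "span_over UNIV (H \<inter> direct_sum k1 U1 U2) = H"
proof -
  define k where "k = k1 + k2"
  define D where "D = direct_sum k1 U1 U2"
  have Dj: "D = (\<lambda>(u, w). join k1 u w) ` (U1 \<times> U2)" unfolding D_def by (rule direct_sum_join)
  have U1v: "U1 \<subseteq> vecs k1" and clU1: "cl K U1" and sp1: "span_over UNIV U1 = vecs k1"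
    using sys1 unfolding is_system_def subspace_cl by auto
  have U2v: "U2 \<subseteq> vecs k2" and clU2: "cl K U2" and sp2: "span_over UNIV U2 = vecs k2"
    using sys2 unfolding is_system_def subspace_cl by auto
  have z1: "0 \<in> U1" and z2: "0 \<in> U2" using clU1 clU2 unfolding cl_def by auto
  have fK: "finite K" by simp
  have q2: "2 \<le> q" using subfield_card_ge2[OF K fK] cK by simp
  have Hs: "subspace_over UNIV k H" using H unfolding is_hyperplane_def k_def by auto
  then have Hv: "H \<subseteq> vecs k" and clH: "cl UNIV H" unfolding subspace_cl by auto
  have sub1: "span_over UNIV (H \<inter> D) \<subseteq> H" by (rule span_least[OF clH]) auto
  obtain lam where ladd: "\<forall>u\<in>vecs k. \<forall>v\<in>vecs k. lam (u + v) = lam u + lam v"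
    and lsm: "\<forall>c. \<forall>u\<in>vecs k. lam (sm c u) = c * lam u"
    and lker: "\<forall>v\<in>vecs k. lam v = 0 \<longleftrightarrow> v \<in> H"
    using hyperplane_functional[OF H] unfolding k_def by blast
  define S where "S = span_over UNIV (H \<inter> D)"
  have clS: "cl UNIV S" unfolding S_def by (rule span_cl[OF subfield_UNIV])
  have HDS: "H \<inter> D \<subseteq> S" unfolding S_def using span_sub[OF subfield_UNIV] by blast
  define \<mu>1 where "\<mu>1 u = lam (join k1 u 0)" for u
  define \<mu>2 where "\<mu>2 w = lam (join k1 0 w)" for w
  have jl: "join k1 u 0 \<in> vecs k" if "u \<in> vecs k1" for u using join_vecs[OF that vecs_zero] unfolding k_def .
  have jr: "join k1 0 w \<in> vecs k" if "w \<in> vecs k2" for w using join_vecs[OF vecs_zero that] unfolding k_def .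
  have add1: "\<forall>u\<in>vecs k1. \<forall>v\<in>vecs k1. \<mu>1 (u + v) = \<mu>1 u + \<mu>1 v"
    unfolding \<mu>1_def by (simp add: joinl_add ladd jl)
  have hom1: "\<forall>c. \<forall>u\<in>vecs k1. \<mu>1 (sm c u) = c * \<mu>1 u"
    unfolding \<mu>1_def by (simp add: joinl_sm lsm jl)
  have add2: "\<forall>u\<in>vecs k2. \<forall>v\<in>vecs k2. \<mu>2 (u + v) = \<mu>2 u + \<mu>2 v"
    unfolding \<mu>2_def by (simp add: joinr_add ladd jr)
  have hom2: "\<forall>c. \<forall>u\<in>vecs k2. \<mu>2 (sm c u) = c * \<mu>2 u"
    unfolding \<mu>2_def by (simp add: joinr_sm lsm jr)
  have lsplit: "lam h = \<mu>1 (pl k1 h) + \<mu>2 (pr k1 h)" if h: "h \<in> vecs k" for h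
  proof -
    have hv: "h \<in> vecs (k1 + k2)" using h(1) unfolding k_def by simp
    have "lam h = lam (join k1 (pl k1 h) 0 + join k1 0 (pr k1 h))"
      using join_split[of k1 "pl k1 h" "pr k1 h"] join_pl_pr[OF hv] by simp
    also have "\<dots> = \<mu>1 (pl k1 h) + \<mu>2 (pr k1 h)"
      unfolding \<mu>1_def \<mu>2_def by (rule ladd[rule_format, OF jl[OF pl_vecs] jr[OF pr_vecs[OF hv]]])
    finally show ?thesis .
  qed
  define T1 where "T1 = {u\<in>vecs k1. join k1 u 0 \<in> S}"
  define T2 where "T2 = {u\<in>vecs k2. join k1 0 u \<in> S}"
  have clT1: "cl UNIV T1" unfolding T1_def
    by (rule cl_preimage[OF clS]) (simp_all add: joinl_add joinl_sm join_zero)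
  have clT2: "cl UNIV T2" unfolding T2_def
    by (rule cl_preimage[OF clS]) (simp_all add: joinr_add joinr_sm join_zero)
  have inS1: "join k1 u 0 \<in> S" if "u \<in> U1" "\<mu>1 u = 0" for u
  proof -
    have jv: "join k1 u 0 \<in> vecs k" using jl that U1v by blast
    have "join k1 u 0 \<in> H" using lker[rule_format, OF jv] that(2) unfolding \<mu>1_def by simp
    moreover have "join k1 u 0 \<in> D" unfolding Dj using that z2 by auto
    ultimately show ?thesis using HDS by blast
  qed
  have inS2: "join k1 0 w \<in> S" if "w \<in> U2" "\<mu>2 w = 0" for w
  proof -
    have jv: "join k1 0 w \<in> vecs k" using jr that U2v by blast
    have "join k1 0 w \<in> H" using lker[rule_format, OF jv] that(2) unfolding \<mu>2_def by simp
    moreover have "join k1 0 w \<in> D" unfolding Dj using that z1 by auto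
    ultimately show ?thesis using HDS by blast
  qed
  have H1T: "{u\<in>vecs k1. \<mu>1 u = 0} \<subseteq> T1"
  proof (cases "\<exists>v0\<in>vecs k1. \<mu>1 v0 \<noteq> 0")
    case True
    then obtain v0 where v0: "v0 \<in> vecs k1" "\<mu>1 v0 \<noteq> 0" by blast
    have "is_hyperplane k1 {u\<in>vecs k1. \<mu>1 u = 0}" by (rule functional_hyperplane[OF add1 hom1 v0])
    then have e: "span_over UNIV ({u\<in>vecs k1. \<mu>1 u = 0} \<inter> U1) = {u\<in>vecs k1. \<mu>1 u = 0}"
      using cut1 unfolding is_cutting_def by blast
    have "{u\<in>vecs k1. \<mu>1 u = 0} \<inter> U1 \<subseteq> T1" unfolding T1_def using inS1 U1v by auto
    from span_least[OF clT1 this] show ?thesis unfolding e .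
  next
    case False
    have "U1 \<subseteq> T1" unfolding T1_def using inS1 False U1v by auto
    from span_least[OF clT1 this] have "vecs k1 \<subseteq> T1" unfolding sp1 .
    then show ?thesis by auto
  qed
  have H2T: "{u\<in>vecs k2. \<mu>2 u = 0} \<subseteq> T2"
  proof (cases "\<exists>v0\<in>vecs k2. \<mu>2 v0 \<noteq> 0")
    case True
    then obtain v0 where v0: "v0 \<in> vecs k2" "\<mu>2 v0 \<noteq> 0" by blast
    have "is_hyperplane k2 {u\<in>vecs k2. \<mu>2 u = 0}" by (rule functional_hyperplane[OF add2 hom2 v0])
    then have e: "span_over UNIV ({u\<in>vecs k2. \<mu>2 u = 0} \<inter> U2) = {u\<in>vecs k2. \<mu>2 u = 0}"
      using cut2 unfolding is_cutting_def by blast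
    have "{u\<in>vecs k2. \<mu>2 u = 0} \<inter> U2 \<subseteq> T2" unfolding T2_def using inS2 U2v by auto
    from span_least[OF clT2 this] show ?thesis unfolding e .
  next
    case False
    have "U2 \<subseteq> T2" unfolding T2_def using inS2 False U2v by auto
    from span_least[OF clT2 this] have "vecs k2 \<subseteq> T2" unfolding sp2 .
    then show ?thesis by auto
  qed
  have P: "h \<in> S" if h: "h \<in> vecs k" "lam h = 0" "\<mu>1 (pl k1 h) = 0" for h
  proof -
    have hv: "h \<in> vecs (k1 + k2)" using h(1) unfolding k_def by simp
    have "\<mu>2 (pr k1 h) = 0" using lsplit[OF h(1)] h by simp
    then have "pr k1 h \<in> T2" using H2T pr_vecs[OF hv] by blast
    moreover have "pl k1 h \<in> T1" using H1T pl_vecs h by blast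
    ultimately have "join k1 (pl k1 h) 0 + join k1 0 (pr k1 h) \<in> S"
      using clS unfolding cl_def T1_def T2_def by blast
    then show "h \<in> S" using join_split[of k1 "pl k1 h" "pr k1 h"] join_pl_pr[OF hv] by simp
  qed
  have "H \<subseteq> S"
  proof
    fix h assume hH: "h \<in> H"
    then have h: "h \<in> vecs k" "lam h = 0" using Hv lker by auto
    have hv: "h \<in> vecs (k1 + k2)" using h(1) unfolding k_def by simp
    show "h \<in> S"
    proof (cases "\<mu>1 (pl k1 h) = 0")
      case True then show ?thesis using P h by blast
    next
      case False
      have nz2: "\<mu>2 (pr k1 h) \<noteq> 0" using lsplit[OF h(1)] h False by (metis add.right_neutral)
      obtain d1 where d1: "card (\<mu>1 ` U1) * card K ^ d1 = card K ^ n1" "int d1 \<le> int n1 - int m - 1 + int t1"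
        using image_count[OF K sys1 ev1 add1 hom1 pl_vecs False] by blast
      obtain d2 where d2: "card (\<mu>2 ` U2) * card K ^ d2 = card K ^ n2" "int d2 \<le> int n2 - int m - 1 + int t2"
        using image_count[OF K sys2 ev2 add2 hom2 pr_vecs[OF hv] nz2] by blast
      define A where "A = \<mu>1 ` U1"
      define B where "B = \<mu>2 ` U2"
      have "(card A * q ^ d1) * (card B * q ^ d2) = q ^ n1 * q ^ n2" using d1 d2 cK unfolding A_def B_def by simp
      then have e: "card A * card B * q ^ (d1 + d2) = q ^ (n1 + n2)" by (simp add: power_add mult_ac)
      obtain r where r: "n1 + n2 = (d1 + d2) + r" "m + 1 \<le> r"
      proof -
        have "d1 + d2 + (m + 1) \<le> n1 + n2" using d1(2) d2(2) t by linarith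
        then show ?thesis using that[of "n1 + n2 - (d1 + d2)"] by linarith
      qed
      have "q ^ (n1 + n2) = q ^ r * q ^ (d1 + d2)" unfolding r(1) power_add by (simp only: mult.commute)
      with e have "card A * card B * q ^ (d1 + d2) = q ^ r * q ^ (d1 + d2)" by (rule trans)
      then have cAB: "card A * card B = q ^ r" using q2 by simp
      have "card (UNIV :: 'a set) = q ^ m" by (rule cF)
      also have "\<dots> < q ^ (m + 1)" using q2 by simp
      also have "\<dots> \<le> q ^ r" using q2 r(2) by (intro power_increasing) simp_all
      also have "\<dots> = card A * card B" using cAB by simp
      finally have "card A * card B > card (UNIV :: 'a set)" .
      then obtain a a' b b' where ab: "a \<in> A" "a' \<in> A" "b \<in> B" "b' \<in> B" "a \<noteq> a'" "a + b = a' + b'"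
        using pigeon by blast
      obtain u u' w w' where uw: "u \<in> U1" "u' \<in> U1" "w \<in> U2" "w' \<in> U2"
        "a = \<mu>1 u" "a' = \<mu>1 u'" "b = \<mu>2 w" "b' = \<mu>2 w'"
        using ab unfolding A_def B_def by blast
      define u1 where "u1 = u - u'"
      define u2 where "u2 = w - w'"
      have u1U: "u1 \<in> U1" unfolding u1_def by (rule cl_diff[OF clU1 K uw(1,2)])
      have u2U: "u2 \<in> U2" unfolding u2_def by (rule cl_diff[OF clU2 K uw(3,4)])
      have u1v: "u1 \<in> vecs k1" using u1U U1v by blast
      have u2v: "u2 \<in> vecs k2" using u2U U2v by blast
      have m1: "\<mu>1 u1 = a - a'"
      proof -
        have "\<mu>1 u = \<mu>1 (u1 + u')" unfolding u1_def by simp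
        also have "\<dots> = \<mu>1 u1 + \<mu>1 u'" using add1 u1v uw U1v by blast
        finally show ?thesis using uw by simp
      qed
      have m2: "\<mu>2 u2 = b - b'"
      proof -
        have "\<mu>2 w = \<mu>2 (u2 + w')" unfolding u2_def by simp
        also have "\<dots> = \<mu>2 u2 + \<mu>2 w'" using add2 u2v uw U2v by blast
        finally show ?thesis using uw by simp
      qed
      have m1nz: "\<mu>1 u1 \<noteq> 0" using m1 ab by simp
      define z where "z = join k1 u1 u2"
      have zv: "z \<in> vecs k" unfolding z_def k_def by (rule join_vecs[OF u1v u2v])
      have lz: "lam z = 0"
        using lsplit[OF zv] m1 m2 ab(6) unfolding z_def pl_join[OF u1v] pr_join
        by (simp add: algebra_simps)
      have "z \<in> D" unfolding Dj z_def using u1U u2U by auto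
      moreover have "z \<in> H" using lker zv lz by blast
      ultimately have zS: "z \<in> S" using HDS by blast
      define c where "c = \<mu>1 (pl k1 h) / \<mu>1 u1"
      define h' where "h' = h + sm (- c) z"
      have h'v: "h' \<in> vecs k" unfolding h'_def by (rule vecs_add[OF h(1) vecs_sm[OF zv]])
      have "lam h' = lam h + lam (sm (- c) z)" unfolding h'_def by (rule ladd[rule_format, OF h(1) vecs_sm[OF zv]])
      also have "lam (sm (- c) z) = (- c) * lam z" by (rule lsm[rule_format, OF zv])
      finally have lh': "lam h' = 0" using h lz by simp
      have plh: "pl k1 h' = pl k1 h + sm (- c) u1" unfolding h'_def pl_add_sm z_def pl_join[OF u1v] ..
      have "\<mu>1 (pl k1 h') = \<mu>1 (pl k1 h) + \<mu>1 (sm (- c) u1)" unfolding plh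
        by (rule add1[rule_format, OF pl_vecs vecs_sm[OF u1v]])
      also have "\<mu>1 (sm (- c) u1) = (- c) * \<mu>1 u1" by (rule hom1[rule_format, OF u1v])
      finally have "\<mu>1 (pl k1 h') = \<mu>1 (pl k1 h) + (- c) * \<mu>1 u1" .
      then have "\<mu>1 (pl k1 h') = 0" unfolding c_def using m1nz by simp
      then have "h' \<in> S" using P h'v lh' by blast
      moreover have "sm c z \<in> S" using clS zS unfolding cl_def by blast
      ultimately have "h' + sm c z \<in> S" using clS unfolding cl_def by blast
      moreover have "h' + sm c z = h" unfolding h'_def by (simp add: fun_eq_iff)
      ultimately show ?thesis by simp
    qed
  qed
  then show ?thesis using sub1 unfolding S_def D_def by blast
qed

theorem proposition3p8:
  fixes K :: "'a::{field,finite} set"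
    and q m n1 n2 k1 k2 t1 t2 :: nat
    and U1 U2 :: "(nat \<Rightarrow> 'a) set"
  assumes "\<exists>p e. prime p \<and> e > 0 \<and> q = p ^ e"
    and "m > 0"
    and "is_subfield K" and "card K = q" and "card (UNIV :: 'a set) = q ^ m"
    and "is_system K n1 k1 U1" and "is_cutting k1 U1"
    and "is_evasive K k1 (int k1 - 1) (int n1 - int m - 1 + int t1) U1"
    and "is_system K n2 k2 U2" and "is_cutting k2 U2"
    and "is_evasive K k2 (int k2 - 1) (int n2 - int m - 1 + int t2) U2"
    and "t1 + t2 < m + 2"
  shows "is_system K (n1 + n2) (k1 + k2) (direct_sum k1 U1 U2)
       \<and> is_cutting (k1 + k2) (direct_sum k1 U1 U2)"
proof
  show "is_system K (n1 + n2) (k1 + k2) (direct_sum k1 U1 U2)"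
    by (rule system_part[OF assms(3) assms(6) assms(9)])
  show "is_cutting (k1 + k2) (direct_sum k1 U1 U2)"
    unfolding is_cutting_def
    using cutting_part[OF assms(3) assms(4) assms(5) assms(6) assms(7) assms(8) assms(9) assms(10) assms(11) assms(12)]
    by blast
qed

end
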